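(* Let $U_n\subset C^n([a,b],\mathbb{K})$ (with $\mathbb{K}=\mathbb{R}$ or $\mathbb{C}$, $a<b$) be a subspace of dimension $n+1$ possessing a non-negative Bernstein basis $p_{n,0},\dots,p_{n,n}$ for $\{a,b\}$. Suppose $f_0,f_1\in U_n$ are such that $f_0>0$ on $[a,b]$ and $f_1/f_0$ is strictly increasing on $[a,b]$, and write $f_0=\sum_{k=0}^n\beta_kp_{n,k}$, $f_1=\sum_{k=0}^n\gamma_kp_{n,k}$. Then there exist points $t_0,\dots,t_n\in[a,b]$ and positive coefficients $\alpha_0,\dots,\alpha_n$ such that the operator $B_nf=\sum_{k=0}^nf(t_k)\alpha_kp_{n,k}$ satisfies $B_nf_0=f_0$ and $B_nf_1=f_1$ if and only if $\beta_k>0$ for all $k$ and $$\frac{f_1(a)}{f_0(a)}=\frac{\gamma_0}{\beta_0}\le\frac{\gamma_k}{\beta_k}\le\frac{\gamma_n}{\beta_n}=\frac{f_1(b)}{f_0(b)}\quad\text{for all }k=0,\dots,n.$$ Moreover, such points and coefficients, when they exist, are unique.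
   Context: A function $f\in C^m([a,b],\mathbb{K})$ has a zero of order $k$ at $c$ if $f(c)=\dots=f^{(k-1)}(c)=0$ and $f^{(k)}(c)\ne0$ (one-sided derivatives at endpoints). For an $(m+1)$-dimensional space $V\subset C^m([a,b],\mathbb{K})$, a Bernstein basis for $\{a,b\}$ is a system $p_{m,0},\dots,p_{m,m}$ in $V$ such that each $p_{m,k}$ has a zero of order exactly $k$ at $a$ and of order exactly $m-k$ at $b$ (it is a basis of $V$). It is non-negative if each $p_{m,k}$ is real-valued and $\ge0$ on $[a,b]$. *)

theory Defs
  imports "HOL-Analysis.Analysis"
begin

text \<open>Scalars: the field 'a is a real normed field (instances: real, complex).
  Functions on [a,b] are represented by total functions real => 'a; only their
  values on {a..b} matter.\<close>

definition deriv_seq :: "nat \<Rightarrow> real \<Rightarrow> real \<Rightarrow> (real \<Rightarrow> 'a::real_normed_vector)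
    \<Rightarrow> (nat \<Rightarrow> real \<Rightarrow> 'a) \<Rightarrow> bool" where
  "deriv_seq m a b f D \<longleftrightarrow>
     (\<forall>x\<in>{a..b}. D 0 x = f x) \<and>
     (\<forall>j<m. \<forall>x\<in>{a..b}. (D j has_vector_derivative D (Suc j) x) (at x within {a..b})) \<and>
     (\<forall>j\<le>m. continuous_on {a..b} (D j))"

definition Cm_on :: "nat \<Rightarrow> real \<Rightarrow> real \<Rightarrow> (real \<Rightarrow> 'a::real_normed_vector) \<Rightarrow> bool" where
  "Cm_on m a b f \<longleftrightarrow> (\<exists>D. deriv_seq m a b f D)"

definition zero_order :: "nat \<Rightarrow> real \<Rightarrow> real \<Rightarrow> (real \<Rightarrow> 'a::real_normed_vector)
    \<Rightarrow> real \<Rightarrow> nat \<Rightarrow> bool" where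
  "zero_order m a b f c k \<longleftrightarrow> k \<le> m \<and>
     (\<exists>D. deriv_seq m a b f D \<and> (\<forall>j<k. D j c = 0) \<and> D k c \<noteq> 0)"

text \<open>p 0, ..., p m (real-valued, viewed as 'a-valued via of_real) is a Bernstein basis for
  {a,b} of the space they span in C^m([a,b],'a): each p k is C^m, has a zero of order exactly
  k at a and of order exactly m-k at b, and the p k are linearly independent over 'a on [a,b].
  (The space V is then the 'a-span of p 0..p m, of dimension m+1.)\<close>
definition bernstein_basis :: "nat \<Rightarrow> real \<Rightarrow> real \<Rightarrow> (nat \<Rightarrow> real \<Rightarrow> real)
    \<Rightarrow> 'a::real_normed_field itself \<Rightarrow> bool" where
  "bernstein_basis m a b p TYPE('a) \<longleftrightarrow>
     (\<forall>k\<le>m. Cm_on m a b (\<lambda>x. (of_real (p k x) :: 'a))) \<and>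
     (\<forall>k\<le>m. zero_order m a b (\<lambda>x. (of_real (p k x) :: 'a)) a k) \<and>
     (\<forall>k\<le>m. zero_order m a b (\<lambda>x. (of_real (p k x) :: 'a)) b (m - k)) \<and>
     (\<forall>c::nat \<Rightarrow> 'a. (\<forall>x\<in>{a..b}. (\<Sum>k\<le>m. c k * of_real (p k x)) = 0) \<longrightarrow> (\<forall>k\<le>m. c k = 0))"

definition nonneg_basis :: "nat \<Rightarrow> real \<Rightarrow> real \<Rightarrow> (nat \<Rightarrow> real \<Rightarrow> real) \<Rightarrow> bool" where
  "nonneg_basis m a b p \<longleftrightarrow> (\<forall>k\<le>m. \<forall>x\<in>{a..b}. 0 \<le> p k x)"

text \<open>Real positivity / real order for elements of 'a (meaningful only for real elements).\<close>
definition real_pos :: "'a::real_normed_field \<Rightarrow> bool" where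
  "real_pos z \<longleftrightarrow> (\<exists>r::real. r > 0 \<and> z = of_real r)"

definition real_le :: "'a::real_normed_field \<Rightarrow> 'a \<Rightarrow> bool" where
  "real_le z w \<longleftrightarrow> (\<exists>r s::real. z = of_real r \<and> w = of_real s \<and> r \<le> s)"

definition bern_op :: "nat \<Rightarrow> (nat \<Rightarrow> real \<Rightarrow> real) \<Rightarrow> (nat \<Rightarrow> real) \<Rightarrow> (nat \<Rightarrow> real)
    \<Rightarrow> (real \<Rightarrow> 'a::real_normed_field) \<Rightarrow> real \<Rightarrow> 'a" where
  "bern_op n p t \<alpha> f x = (\<Sum>k\<le>n. f (t k) * of_real (\<alpha> k) * of_real (p k x))"

definition admissible :: "nat \<Rightarrow> real \<Rightarrow> real \<Rightarrow> (nat \<Rightarrow> real \<Rightarrow> real)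
    \<Rightarrow> (real \<Rightarrow> 'a::real_normed_field) \<Rightarrow> (real \<Rightarrow> 'a) \<Rightarrow> (nat \<Rightarrow> real) \<Rightarrow> (nat \<Rightarrow> real) \<Rightarrow> bool" where
  "admissible n a b p f0 f1 t \<alpha> \<longleftrightarrow>
     (\<forall>k\<le>n. t k \<in> {a..b} \<and> \<alpha> k > 0) \<and>
     (\<forall>x\<in>{a..b}. bern_op n p t \<alpha> f0 x = f0 x) \<and>
     (\<forall>x\<in>{a..b}. bern_op n p t \<alpha> f1 x = f1 x)"

end

theory Submission
  imports Defs
begin

lemma cont_of_Cm: assumes "Cm_on m a b F" shows "continuous_on {a..b} F"
proof -
  obtain D where D: "deriv_seq m a b F D" using assms unfolding Cm_on_def by blast
  then have "continuous_on {a..b} (D 0)" "\<forall>x\<in>{a..b}. D 0 x = F x" unfolding deriv_seq_def by auto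
  then show ?thesis using continuous_on_eq by blast
qed

lemma zo_val: assumes "zero_order m a b F c k" "c \<in> {a..b}" shows "F c = 0 \<longleftrightarrow> k \<noteq> 0"
proof -
  obtain D where D: "deriv_seq m a b F D" "\<forall>j<k. D j c = 0" "D k c \<noteq> 0"
    using assms(1) unfolding zero_order_def by blast
  then have "D 0 c = F c" using assms(2) by (auto simp: deriv_seq_def)
  then show ?thesis using D by (cases "k = 0") auto
qed

theorem theorem2:
  fixes a b :: real and n :: nat
    and p :: "nat \<Rightarrow> real \<Rightarrow> real"
    and f0 f1 :: "real \<Rightarrow> 'a::real_normed_field"
    and \<beta> \<gamma> :: "nat \<Rightarrow> 'a"
  assumes "a < b"
    and "bernstein_basis n a b p TYPE('a)"
    and "nonneg_basis n a b p"
    and "\<forall>x\<in>{a..b}. f0 x = (\<Sum>k\<le>n. \<beta> k * of_real (p k x))"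
    and "\<forall>x\<in>{a..b}. f1 x = (\<Sum>k\<le>n. \<gamma> k * of_real (p k x))"
    and "\<forall>x\<in>{a..b}. real_pos (f0 x)"
    and "\<exists>g. strict_mono_on {a..b} g \<and> (\<forall>x\<in>{a..b}. f1 x / f0 x = of_real (g x))"
  shows "((\<exists>t \<alpha>. admissible n a b p f0 f1 t \<alpha>) \<longleftrightarrow>
           (\<forall>k\<le>n. real_pos (\<beta> k)) \<and>
           f1 a / f0 a = \<gamma> 0 / \<beta> 0 \<and> \<gamma> n / \<beta> n = f1 b / f0 b \<and>
           (\<forall>k\<le>n. real_le (\<gamma> 0 / \<beta> 0) (\<gamma> k / \<beta> k) \<and> real_le (\<gamma> k / \<beta> k) (\<gamma> n / \<beta> n)))
         \<and> (\<forall>t \<alpha> t' \<alpha>'. admissible n a b p f0 f1 t \<alpha> \<longrightarrow> admissible n a b p f0 f1 t' \<alpha>' \<longrightarrow>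
              (\<forall>k\<le>n. t k = t' k \<and> \<alpha> k = \<alpha>' k))"
proof -
  note ab = assms(1) and B = assms(2) and R0 = assms(4) and R1 = assms(5) and pos = assms(6)
  obtain g where gm: "strict_mono_on {a..b} g" and gh: "\<forall>x\<in>{a..b}. f1 x / f0 x = of_real (g x)"
    using assms(7) by blast
  have aI: "a \<in> {a..b}" and bI: "b \<in> {a..b}" using ab by auto
  have indep: "\<forall>k\<le>n. c k = 0" if "\<forall>x\<in>{a..b}. (\<Sum>k\<le>n. c k * of_real (p k x)) = (0::'a)" for c :: "nat \<Rightarrow> 'a"
    using B that unfolding bernstein_basis_def by blast
  have pa: "(of_real (p k a)::'a) = 0 \<longleftrightarrow> k \<noteq> 0" if "k \<le> n" for k
  proof -
    have "zero_order n a b (\<lambda>x. of_real (p k x)::'a) a k" using B that unfolding bernstein_basis_def by blast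
    from zo_val[OF this aI] show ?thesis by simp
  qed
  have pb: "(of_real (p k b)::'a) = 0 \<longleftrightarrow> n - k \<noteq> 0" if "k \<le> n" for k
  proof -
    have "zero_order n a b (\<lambda>x. of_real (p k x)::'a) b (n - k)" using B that unfolding bernstein_basis_def by blast
    from zo_val[OF this bI] show ?thesis by simp
  qed
  have atA: "f a = c 0 * of_real (p 0 a)" if "\<forall>x\<in>{a..b}. f x = (\<Sum>k\<le>n. c k * of_real (p k x))" for f c :: "_ \<Rightarrow> 'a"
  proof -
    have "f a = (\<Sum>k\<le>n. c k * of_real (p k a))" using that aI by blast
    also have "\<dots> = c 0 * of_real (p 0 a) + (\<Sum>k\<in>{..n}-{0}. c k * of_real (p k a))"
      by (subst sum.remove[of _ 0]) auto
    also have "(\<Sum>k\<in>{..n}-{0}. c k * (of_real (p k a)::'a)) = 0"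
      by (rule sum.neutral) (use pa in force)
    finally show ?thesis by simp
  qed
  have atB: "f b = c n * of_real (p n b)" if "\<forall>x\<in>{a..b}. f x = (\<Sum>k\<le>n. c k * of_real (p k x))" for f c :: "_ \<Rightarrow> 'a"
  proof -
    have "f b = (\<Sum>k\<le>n. c k * of_real (p k b))" using that bI by blast
    also have "\<dots> = c n * of_real (p n b) + (\<Sum>k\<in>{..n}-{n}. c k * of_real (p k b))"
      by (subst sum.remove[of _ n]) auto
    also have "(\<Sum>k\<in>{..n}-{n}. c k * (of_real (p k b)::'a)) = 0"
      by (rule sum.neutral) (use pb in force)
    finally show ?thesis by simp
  qed
  have pa0: "(of_real (p 0 a)::'a) \<noteq> 0" using pa[of 0] by simp
  have pbn: "(of_real (p n b)::'a) \<noteq> 0" using pb[of n] by simp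
  have qa: "f1 a / f0 a = \<gamma> 0 / \<beta> 0"
    using atA[OF R0] atA[OF R1] pa0 by (simp add: nonzero_mult_divide_mult_cancel_right)
  have qb: "\<gamma> n / \<beta> n = f1 b / f0 b"
    using atB[OF R0] atB[OF R1] pbn by (simp add: nonzero_mult_divide_mult_cancel_right)
  have qa': "\<gamma> 0 / \<beta> 0 = of_real (g a)" using qa gh aI by metis
  have qb': "\<gamma> n / \<beta> n = of_real (g b)" using qb gh bI by metis
  have f0nz: "f0 x \<noteq> 0" if "x \<in> {a..b}" for x
    using pos that unfolding real_pos_def by fastforce
  have cont_p: "continuous_on {a..b} (\<lambda>x. of_real (p k x)::'a)" if "k \<le> n" for k
    using B that cont_of_Cm unfolding bernstein_basis_def by blast
  have cs: "continuous_on {a..b} (\<lambda>x. \<Sum>k\<le>n. c k * (of_real (p k x)::'a))" for c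
    apply (intro continuous_on_sum continuous_on_mult continuous_on_const)
    using cont_p by auto
  have cf0: "continuous_on {a..b} f0" using continuous_on_eq[OF cs] R0 by metis
  have cf1: "continuous_on {a..b} f1" using continuous_on_eq[OF cs] R1 by metis
  have ch: "continuous_on {a..b} (\<lambda>x. f1 x / f0 x)"
    using cf0 cf1 f0nz by (intro continuous_on_divide) auto
  have gform: "g x = g a + norm (f1 x / f0 x - f1 a / f0 a)" if "x \<in> {a..b}" for x
  proof -
    have "g a \<le> g x" using strict_mono_on_leD[OF gm aI that] that by auto
    moreover have "norm (f1 x / f0 x - f1 a / f0 a) = norm (of_real (g x - g a)::'a)"
      using gh that aI by (simp add: of_real_diff)
    moreover have "norm (of_real (g x - g a)::'a) = g x - g a" using calculation(1) by (subst norm_of_real) simp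
    ultimately show ?thesis by simp
  qed
  have cg: "continuous_on {a..b} g"
  proof (rule continuous_on_eq)
    show "continuous_on {a..b} (\<lambda>x. g a + norm (f1 x / f0 x - f1 a / f0 a))"
      by (intro continuous_on_add continuous_on_const continuous_on_norm continuous_on_diff ch)
  qed (rule gform[symmetric])
  have fwd: "\<forall>k\<le>n. f0 (t k) * of_real (\<alpha> k) = \<beta> k \<and> f1 (t k) * of_real (\<alpha> k) = \<gamma> k"
    if adm: "admissible n a b p f0 f1 t \<alpha>" for t \<alpha>
  proof -
    have h: "\<forall>k\<le>n. f (t k) * of_real (\<alpha> k) = c k"
      if fr: "\<forall>x\<in>{a..b}. f x = (\<Sum>k\<le>n. c k * of_real (p k x))"
      and bo: "\<forall>x\<in>{a..b}. bern_op n p t \<alpha> f x = f x" for f c :: "_ \<Rightarrow> 'a"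
    proof -
      have "\<forall>k\<le>n. f (t k) * of_real (\<alpha> k) - c k = 0"
      proof (rule indep, intro ballI)
        fix x assume x: "x \<in> {a..b}"
        have "(\<Sum>k\<le>n. (f (t k) * of_real (\<alpha> k) - c k) * of_real (p k x))
           = bern_op n p t \<alpha> f x - (\<Sum>k\<le>n. c k * of_real (p k x))"
          unfolding bern_op_def by (simp add: sum_subtractf left_diff_distrib)
        also have "\<dots> = 0" using fr bo x by simp
        finally show "(\<Sum>k\<le>n. (f (t k) * of_real (\<alpha> k) - c k) * of_real (p k x)) = 0" .
      qed
      then show ?thesis by simp
    qed
    show ?thesis using h[OF R0] h[OF R1] adm unfolding admissible_def by blast
  qed
  have ratio: "\<gamma> k / \<beta> k = of_real (g (t k))" "t k \<in> {a..b}" "\<alpha> k > 0"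
    "f0 (t k) * of_real (\<alpha> k) = \<beta> k"
    if adm: "admissible n a b p f0 f1 t \<alpha>" and k: "k \<le> n" for t \<alpha> k
  proof -
    show tk: "t k \<in> {a..b}" and ak: "\<alpha> k > 0" using adm k unfolding admissible_def by auto
    have e0: "f0 (t k) * of_real (\<alpha> k) = \<beta> k" and e1: "f1 (t k) * of_real (\<alpha> k) = \<gamma> k"
      using fwd[OF adm] k by auto
    then show "f0 (t k) * of_real (\<alpha> k) = \<beta> k" by simp
    have "(of_real (\<alpha> k)::'a) \<noteq> 0" using ak by simp
    then have "\<gamma> k / \<beta> k = f1 (t k) / f0 (t k)"
      unfolding e0[symmetric] e1[symmetric] by (simp add: nonzero_mult_divide_mult_cancel_right)
    then show "\<gamma> k / \<beta> k = of_real (g (t k))" using gh tk by simp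
  qed
  have part1: "(\<exists>t \<alpha>. admissible n a b p f0 f1 t \<alpha>) \<longleftrightarrow>
           (\<forall>k\<le>n. real_pos (\<beta> k)) \<and>
           f1 a / f0 a = \<gamma> 0 / \<beta> 0 \<and> \<gamma> n / \<beta> n = f1 b / f0 b \<and>
           (\<forall>k\<le>n. real_le (\<gamma> 0 / \<beta> 0) (\<gamma> k / \<beta> k) \<and> real_le (\<gamma> k / \<beta> k) (\<gamma> n / \<beta> n))"
  proof
    assume "\<exists>t \<alpha>. admissible n a b p f0 f1 t \<alpha>"
    then obtain t \<alpha> where adm: "admissible n a b p f0 f1 t \<alpha>" by blast
    have "real_pos (\<beta> k) \<and> real_le (\<gamma> 0 / \<beta> 0) (\<gamma> k / \<beta> k) \<and> real_le (\<gamma> k / \<beta> k) (\<gamma> n / \<beta> n)"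
      if k: "k \<le> n" for k
    proof (intro conjI)
      note r = ratio[OF adm k]
      obtain s where s: "s > 0" "f0 (t k) = of_real s" using pos r(2) unfolding real_pos_def by blast
      have "\<beta> k = of_real (s * \<alpha> k)" using r(4) s by simp
      moreover have "s * \<alpha> k > 0" using s r(3) by simp
      ultimately show "real_pos (\<beta> k)" unfolding real_pos_def by blast
      show "real_le (\<gamma> 0 / \<beta> 0) (\<gamma> k / \<beta> k)" unfolding real_le_def
        using qa' r(1) strict_mono_on_leD[OF gm aI r(2)] r(2) by auto
      show "real_le (\<gamma> k / \<beta> k) (\<gamma> n / \<beta> n)" unfolding real_le_def
        using qb' r(1) strict_mono_on_leD[OF gm r(2) bI] r(2) by auto
    qed
    then show "(\<forall>k\<le>n. real_pos (\<beta> k)) \<and>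
           f1 a / f0 a = \<gamma> 0 / \<beta> 0 \<and> \<gamma> n / \<beta> n = f1 b / f0 b \<and>
           (\<forall>k\<le>n. real_le (\<gamma> 0 / \<beta> 0) (\<gamma> k / \<beta> k) \<and> real_le (\<gamma> k / \<beta> k) (\<gamma> n / \<beta> n))"
      using qa qb by blast
  next
    assume R: "(\<forall>k\<le>n. real_pos (\<beta> k)) \<and>
           f1 a / f0 a = \<gamma> 0 / \<beta> 0 \<and> \<gamma> n / \<beta> n = f1 b / f0 b \<and>
           (\<forall>k\<le>n. real_le (\<gamma> 0 / \<beta> 0) (\<gamma> k / \<beta> k) \<and> real_le (\<gamma> k / \<beta> k) (\<gamma> n / \<beta> n))"
    have "\<exists>tk ak. tk \<in> {a..b} \<and> ak > 0 \<and> f0 tk * of_real ak = \<beta> k \<and> f1 tk * of_real ak = \<gamma> k"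
      if k: "k \<le> n" for k
    proof -
      obtain rk where rk: "rk > 0" "\<beta> k = of_real rk" using R k unfolding real_pos_def by blast
      obtain r s where rs: "\<gamma> 0 / \<beta> 0 = of_real r" "\<gamma> k / \<beta> k = of_real s" "r \<le> s"
        using R k unfolding real_le_def by blast
      obtain s' s'' where rs': "\<gamma> k / \<beta> k = of_real s'" "\<gamma> n / \<beta> n = of_real s''" "s' \<le> s''"
        using R k unfolding real_le_def by blast
      have "r = g a" using rs(1) qa' by simp
      moreover have "s' = s" using rs(2) rs'(1) by simp
      moreover have "s'' = g b" using rs'(2) qb' by simp
      ultimately have "g a \<le> s" "s \<le> g b" using rs rs' by auto
      from IVT'[OF this _ cg] ab obtain tk where tk: "tk \<in> {a..b}" "g tk = s" by auto
      obtain v where v: "v > 0" "f0 tk = of_real v" using pos tk unfolding real_pos_def by blast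
      define ak where "ak = rk / v"
      have ak: "ak > 0" using rk v unfolding ak_def by simp
      have e0: "f0 tk * of_real ak = \<beta> k"
      proof -
        have "v * ak = rk" using v unfolding ak_def by simp
        then have "of_real v * of_real ak = (of_real rk::'a)" by (metis of_real_mult)
        then show ?thesis using v rk by simp
      qed
      have bnz: "\<beta> k \<noteq> 0" using rk by simp
      have "f1 tk * of_real ak = (f1 tk / f0 tk) * (f0 tk * of_real ak)"
        using f0nz[OF tk(1)] by (simp add: field_simps)
      also have "\<dots> = (\<gamma> k / \<beta> k) * \<beta> k" using gh tk rs(2) e0 by simp
      also have "\<dots> = \<gamma> k" using bnz by simp
      finally show ?thesis using tk ak e0 by blast
    qed
    then have "\<forall>k. \<exists>x. k \<le> n \<longrightarrow> fst x \<in> {a..b} \<and> snd x > 0 \<and> f0 (fst x) * of_real (snd x) = \<beta> k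
        \<and> f1 (fst x) * of_real (snd x) = \<gamma> k" by fastforce
    then obtain h where h: "\<forall>k. k \<le> n \<longrightarrow> fst (h k) \<in> {a..b} \<and> snd (h k) > 0 \<and> f0 (fst (h k)) * of_real (snd (h k)) = \<beta> k
        \<and> f1 (fst (h k)) * of_real (snd (h k)) = \<gamma> k" by (rule choice[THEN exE]) blast
    define t where "t k = fst (h k)" for k
    define \<alpha> where "\<alpha> k = snd (h k)" for k
    have T: "\<forall>k\<le>n. t k \<in> {a..b} \<and> \<alpha> k > 0 \<and> f0 (t k) * of_real (\<alpha> k) = \<beta> k
        \<and> f1 (t k) * of_real (\<alpha> k) = \<gamma> k" using h unfolding t_def \<alpha>_def by blast
    have "admissible n a b p f0 f1 t \<alpha>"
      unfolding admissible_def bern_op_def using T R0 R1 by (auto intro!: sum.cong)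
    then show "\<exists>t \<alpha>. admissible n a b p f0 f1 t \<alpha>" by blast
  qed
  have part2: "\<forall>t \<alpha> t' \<alpha>'. admissible n a b p f0 f1 t \<alpha> \<longrightarrow> admissible n a b p f0 f1 t' \<alpha>' \<longrightarrow>
              (\<forall>k\<le>n. t k = t' k \<and> \<alpha> k = \<alpha>' k)"
  proof (intro allI impI)
    fix t \<alpha> t' \<alpha>' k
    assume A1: "admissible n a b p f0 f1 t \<alpha>" and A2: "admissible n a b p f0 f1 t' \<alpha>'" and k: "k \<le> n"
    note r1 = ratio[OF A1 k] and r2 = ratio[OF A2 k]
    have "g (t k) = g (t' k)" using r1(1) r2(1) by simp
    then have tt: "t k = t' k" using strict_mono_on_eqD[OF gm _ r2(2) r1(2)] by simp
    have "f0 (t k) * of_real (\<alpha> k) = f0 (t k) * of_real (\<alpha>' k)" using r1(4) r2(4) tt by simp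
    then have "\<alpha> k = \<alpha>' k" using f0nz[OF r1(2)] by simp
    then show "t k = t' k \<and> \<alpha> k = \<alpha>' k" using tt by simp
  qed
  show ?thesis using part1 part2 by blast
qed

end
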